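(* Let $g(x)=\sum_{k=0}^\infty a_k x^k$ be a real power series convergent for $x\in(-\varrho,\varrho)$, some $\varrho\in(0,\infty)$, and put $G(y)=g(1/y)$. Then for every real $y>1+\max\{1,1/\varrho\}$, $$(y+1)G(y)-yG(y-1)=a_0-\sum_{k=2}^\infty \frac{\sum_{i=1}^{k-1}\binom{k}{i-1}a_i+\bigl(\binom{k}{k-1}-1\bigr)a_k}{y^k},$$ the series being convergent. Consequently $\lim_{y\to\infty}\bigl((y+1)G(y)-yG(y-1)\bigr)=a_0$. In particular, $\lim_{y\to\infty}\Bigl(\frac{(y+1)^{y+1}}{y^y}-\frac{y^y}{(y-1)^{y-1}}\Bigr)=\mathrm{e}$.
   Context: $\mathrm{e}$ is the base of the natural logarithm; the special case corresponds to $g(x)=(1+x)^{1/x}$ (with value $\mathrm{e}$ at $0$), whose Maclaurin series converges on $(-1,1)$ and has constant term $\mathrm{e}$, so that $G(y)=(1+1/y)^y$. *)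

theory Defs
  imports "HOL-Analysis.Analysis"
begin

definition pser :: "(nat \<Rightarrow> real) \<Rightarrow> real \<Rightarrow> real" where
  "pser a x = (\<Sum>k. a k * x ^ k)"

definition Gfun :: "(nat \<Rightarrow> real) \<Rightarrow> real \<Rightarrow> real" where
  "Gfun a y = pser a (1 / y)"

definition coefc :: "(nat \<Rightarrow> real) \<Rightarrow> nat \<Rightarrow> real" where
  "coefc a k = (\<Sum>i=1..k-1. real (k choose (i - 1)) * a i) + (real (k choose (k - 1)) - 1) * a k"

end

theory Submission
  imports Defs "HOL-Real_Asymp.Real_Asymp"
begin

lemma nb_series:
  fixes x :: real
  assumes x: "0 \<le> x" "x < 1"
  shows "(\<lambda>j. real ((k + j) choose k) * x ^ j) sums ((1 / (1 - x)) ^ Suc k)"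
proof -
  have "(\<lambda>n. ((- (real k + 1)) gchoose n) * (- x) ^ n) sums (1 + - x) powr (- (real k + 1))"
    by (rule gen_binomial_real) (use x in auto)
  moreover have "((- (real k + 1)) gchoose n) * (- x) ^ n = real ((k + n) choose k) * x ^ n" for n
  proof -
    have "((- (real k + 1)) gchoose n) = (-1) ^ n * ((real k + 1 + of_nat n - 1) gchoose n)"
      by (rule gbinomial_minus)
    also have "real k + 1 + of_nat n - 1 = of_nat (k + n)" by simp
    also have "(of_nat (k + n) gchoose n) = real ((k + n) choose n)"
      by (simp add: binomial_gbinomial)
    also have "(k + n) choose n = (k + n) choose k"
      using binomial_symmetric[of n "k+n"] by simp
    finally have eq: "((- (real k + 1)) gchoose n) = (-1) ^ n * real ((k + n) choose k)" .
    have m1: "(-1::real) ^ n * (-1) ^ n = 1" by (induct n) auto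
    have "(- x) ^ n = (-1) ^ n * x ^ n" by (rule power_minus)
    hence "((- (real k + 1)) gchoose n) * (- x) ^ n = ((-1) ^ n * (-1) ^ n) * (real ((k + n) choose k) * x ^ n)"
      using eq by (simp only: mult_ac)
    thus ?thesis using m1 by simp
  qed
  moreover have "(1 + - x) powr (- (real k + 1)) = (1 / (1 - x)) ^ Suc k"
  proof -
    have "(1 - x) powr (- (real k + 1)) = inverse ((1 - x) powr real (Suc k))"
      by (subst powr_minus[symmetric]) (simp add: algebra_simps)
    also have "\<dots> = inverse ((1 - x) ^ Suc k)"
      using x by (subst powr_realpow) auto
    also have "\<dots> = (1 / (1 - x)) ^ Suc k"
      by (simp only: power_one_over inverse_eq_divide)
    finally show ?thesis by simp
  qed
  ultimately show ?thesis by simp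
qed

definition cc :: "(nat \<Rightarrow> real) \<Rightarrow> nat \<Rightarrow> real" where
  "cc a n = (\<Sum>k<n. real ((n - 1) choose k) * a (Suc k))"

lemma key_series:
  fixes a :: "nat \<Rightarrow> real" and x :: real
  assumes x: "0 < x" "x < 1"
    and sa: "summable (\<lambda>k. \<bar>a k\<bar> * (x / (1 - x)) ^ k)"
  shows "(\<lambda>n. cc a n * x ^ n) sums ((\<Sum>k. a k * (x / (1 - x)) ^ k) - a 0)"
proof -
  define t where "t = x / (1 - x)"
  have t0: "0 < t" using x by (simp add: t_def)
  define F where "F = (\<lambda>(k, j). a (Suc k) * real ((k + j) choose k) * x ^ (Suc k + j))"
  have inner: "((\<lambda>j. F (k, j)) has_sum a (Suc k) * t ^ Suc k) UNIV" for k
  proof -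
    have "((\<lambda>j. real ((k + j) choose k) * x ^ j) has_sum (1 / (1 - x)) ^ Suc k) UNIV"
      by (rule sums_nonneg_imp_has_sum[OF nb_series]) (use x in auto)
    hence "((\<lambda>j. (a (Suc k) * x ^ Suc k) * (real ((k + j) choose k) * x ^ j)) has_sum
             (a (Suc k) * x ^ Suc k) * (1 / (1 - x)) ^ Suc k) UNIV"
      by (rule has_sum_cmult_right)
    moreover have "(a (Suc k) * x ^ Suc k) * (1 / (1 - x)) ^ Suc k = a (Suc k) * t ^ Suc k"
      by (simp add: t_def power_divide)
    moreover have "(\<lambda>j. F (k, j)) = (\<lambda>j. (a (Suc k) * x ^ Suc k) * (real ((k + j) choose k) * x ^ j))"
      by (auto simp: F_def power_add)
    ultimately show ?thesis by simp
  qed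
  have innerabs: "((\<lambda>j. norm (F (k, j))) has_sum \<bar>a (Suc k)\<bar> * t ^ Suc k) UNIV" for k
  proof -
    have "((\<lambda>j. real ((k + j) choose k) * x ^ j) has_sum (1 / (1 - x)) ^ Suc k) UNIV"
      by (rule sums_nonneg_imp_has_sum[OF nb_series]) (use x in auto)
    hence "((\<lambda>j. (\<bar>a (Suc k)\<bar> * x ^ Suc k) * (real ((k + j) choose k) * x ^ j)) has_sum
             (\<bar>a (Suc k)\<bar> * x ^ Suc k) * (1 / (1 - x)) ^ Suc k) UNIV"
      by (rule has_sum_cmult_right)
    moreover have "(\<bar>a (Suc k)\<bar> * x ^ Suc k) * (1 / (1 - x)) ^ Suc k = \<bar>a (Suc k)\<bar> * t ^ Suc k"
      by (simp add: t_def power_divide)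
    moreover have "(\<lambda>j. norm (F (k, j))) = (\<lambda>j. (\<bar>a (Suc k)\<bar> * x ^ Suc k) * (real ((k + j) choose k) * x ^ j))"
      using x by (auto simp: F_def power_add abs_mult)
    ultimately show ?thesis by simp
  qed
  have sa': "summable (\<lambda>k. \<bar>a (Suc k)\<bar> * t ^ Suc k)"
    using sa by (subst summable_Suc_iff) (simp add: t_def)
  have "(\<lambda>p. norm (F p)) summable_on Sigma UNIV (\<lambda>_. UNIV)"
  proof (rule Infinite_Sum.abs_summable_on_Sigma_iff[THEN iffD2], intro conjI ballI)
    fix k :: nat
    show "(\<lambda>j. norm (F (k, j))) summable_on UNIV"
      using innerabs by (auto simp: summable_on_def)
  next
    have "(\<lambda>k. \<bar>a (Suc k)\<bar> * t ^ Suc k) summable_on UNIV"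
      by (rule summable_nonneg_imp_summable_on[OF sa']) (use t0 in auto)
    moreover have "\<And>k. infsum (\<lambda>j. norm (F (k, j))) UNIV = \<bar>a (Suc k)\<bar> * t ^ Suc k"
      using innerabs by (auto intro!: infsumI)
    ultimately show "(\<lambda>k. norm (infsum (\<lambda>j. norm (F (k, j))) UNIV)) summable_on UNIV"
      using t0 by (simp add: abs_mult)
  qed
  hence "F summable_on Sigma UNIV (\<lambda>_. UNIV)"
    by (rule abs_summable_summable)
  then obtain S where hS: "(F has_sum S) (Sigma UNIV (\<lambda>_. UNIV))"
    by (auto simp: summable_on_def)
  have h1: "((\<lambda>k. a (Suc k) * t ^ Suc k) has_sum S) UNIV"
    by (rule has_sum_Sigma'[OF hS inner])
  have "summable (\<lambda>k. norm (a k * t ^ k))"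
    using sa t0 by (simp add: t_def abs_mult)
  hence sm: "summable (\<lambda>k. a k * t ^ k)" by (rule summable_norm_cancel)
  have ss: "(\<lambda>k. a (Suc k) * t ^ Suc k) sums ((\<Sum>k. a k * t ^ k) - a 0)"
    using sm by (subst sums_Suc_iff) (simp add: summable_sums)
  have sn: "summable (\<lambda>k. norm (a (Suc k) * t ^ Suc k))"
    using sa' t0 by (simp add: abs_mult)
  have "((\<lambda>k. a (Suc k) * t ^ Suc k) has_sum ((\<Sum>k. a k * t ^ k) - a 0)) UNIV"
    by (rule norm_summable_imp_has_sum[OF sn ss])
  hence Seq: "S = (\<Sum>k. a k * t ^ k) - a 0"
    by (rule has_sum_unique[OF h1])
  define F' where "F' = (\<lambda>(n, k). a (Suc k) * real ((n - 1) choose k) * x ^ n)"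
  have "(F has_sum S) (Sigma UNIV (\<lambda>_. UNIV)) = (F' has_sum S) (Sigma UNIV (\<lambda>n. {..<n}))"
    by (rule has_sum_reindex_bij_witness[where i = "\<lambda>(n, k). (k, n - 1 - k)"
          and j = "\<lambda>(k, j). (k + j + 1, k)"]) (auto simp: F_def F'_def)
  with hS have hF': "(F' has_sum S) (Sigma UNIV (\<lambda>n. {..<n}))" by simp
  have "((\<lambda>k. F' (n, k)) has_sum cc a n * x ^ n) {..<n}" for n
    by (rule has_sum_finiteI) (auto simp: F'_def cc_def sum_distrib_left mult_ac)
  hence "((\<lambda>n. cc a n * x ^ n) has_sum S) UNIV"
    by (rule has_sum_Sigma'[OF hF'])
  hence "(\<lambda>n. cc a n * x ^ n) sums S" by (rule has_sum_imp_sums)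
  thus ?thesis by (simp only: Seq t_def)
qed

lemma tri3: "\<bar>p + q - s\<bar> \<le> \<bar>p\<bar> + \<bar>q\<bar> + \<bar>s :: real\<bar>"
  using abs_triangle_ineq[of "p + q" "- s"] abs_triangle_ineq[of p q] by simp

lemma coefc_cc:
  assumes "n \<ge> 1"
  shows "coefc a n = cc a (Suc n) - a (Suc n) - a n"
proof -
  obtain m where m: "n = Suc m" using assms by (cases n) auto
  have s1: "(\<Sum>i=1..m. real (Suc m choose (i - 1)) * a i) = (\<Sum>k<m. real (Suc m choose k) * a (Suc k))"
    by (simp add: sum.atLeast1_atMost_eq)
  have s2: "cc a (Suc (Suc m)) = (\<Sum>k<m. real (Suc m choose k) * a (Suc k))
      + real (Suc m choose m) * a (Suc m) + a (Suc (Suc m))"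
    by (simp add: cc_def)
  show ?thesis using s1 s2 by (simp add: m coefc_def algebra_simps)
qed

lemma E_bound:
  fixes a :: "nat \<Rightarrow> real" and r z :: real
  assumes r: "0 < r" and sr: "summable (\<lambda>k. \<bar>a (k + 2)\<bar> * r ^ k)"
    and sz: "summable (\<lambda>k. a k * z ^ k)" and zr: "\<bar>z\<bar> \<le> r"
  shows "\<bar>pser a z - a 0 - a 1 * z\<bar> \<le> (\<Sum>k. \<bar>a (k + 2)\<bar> * r ^ k) * z ^ 2"
proof -
  have "(\<lambda>k. a (k + 2) * z ^ (k + 2)) sums (pser a z - (\<Sum>i<2. a i * z ^ i))"
    unfolding pser_def by (rule sums_split_initial_segment[OF summable_sums[OF sz]])
  hence eq: "pser a z - a 0 - a 1 * z = (\<Sum>k. a (k + 2) * z ^ (k + 2))"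
    by (simp add: sums_iff eval_nat_numeral)
  have sf: "summable (\<lambda>k. a (k + 2) * z ^ (k + 2))"
    using sz by (subst summable_iff_shift) 
  have sg: "summable (\<lambda>k. \<bar>a (k + 2)\<bar> * r ^ k * z ^ 2)"
    using sr by (rule summable_mult2)
  have tb: "\<bar>a (k + 2) * z ^ (k + 2)\<bar> \<le> \<bar>a (k + 2)\<bar> * r ^ k * z ^ 2" for k
  proof -
    have "\<bar>z\<bar> ^ k \<le> r ^ k" by (rule power_mono) (use zr in auto)
    hence "\<bar>a (k + 2)\<bar> * \<bar>z\<bar> ^ k * z ^ 2 \<le> \<bar>a (k + 2)\<bar> * r ^ k * z ^ 2"
      by (intro mult_right_mono mult_left_mono) auto
    moreover have "\<bar>a (k + 2) * z ^ (k + 2)\<bar> = \<bar>a (k + 2)\<bar> * \<bar>z\<bar> ^ k * z ^ 2"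
      by (simp add: abs_mult power_add power_abs power2_eq_square)
    ultimately show ?thesis by simp
  qed
  have "(\<Sum>k. a (k + 2) * z ^ (k + 2)) \<le> (\<Sum>k. \<bar>a (k + 2)\<bar> * r ^ k * z ^ 2)"
    by (rule suminf_le[OF _ sf sg]) (use tb in \<open>auto simp: abs_le_iff\<close>)
  moreover have "- (\<Sum>k. a (k + 2) * z ^ (k + 2)) \<le> (\<Sum>k. \<bar>a (k + 2)\<bar> * r ^ k * z ^ 2)"
  proof -
    have "(\<Sum>k. - (a (k + 2) * z ^ (k + 2))) \<le> (\<Sum>k. \<bar>a (k + 2)\<bar> * r ^ k * z ^ 2)"
      by (rule suminf_le[OF _ summable_minus[OF sf] sg]) (use tb in \<open>auto simp: abs_le_iff\<close>)
    thus ?thesis using suminf_minus[OF sf] by simp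
  qed
  moreover have "(\<Sum>k. \<bar>a (k + 2)\<bar> * r ^ k * z ^ 2) = (\<Sum>k. \<bar>a (k + 2)\<bar> * r ^ k) * z ^ 2"
    using sr by (rule suminf_mult2[symmetric])
  ultimately show ?thesis using eq by (simp add: abs_le_iff)
qed

lemma e_limit:
  "((\<lambda>y::real. (y + 1) powr (y + 1) / y powr y - y powr y / (y - 1) powr (y - 1))
            \<longlongrightarrow> exp 1) at_top"
proof -
  have lim: "((\<lambda>y::real. exp ((y+1) * ln (y+1) - y * ln y) - exp (y * ln y - (y-1) * ln (y-1)))
            \<longlongrightarrow> exp 1) at_top"
    by real_asymp
  have ev: "eventually (\<lambda>y::real. exp ((y+1) * ln (y+1) - y * ln y) - exp (y * ln y - (y-1) * ln (y-1))
     = (y + 1) powr (y + 1) / y powr y - y powr y / (y - 1) powr (y - 1)) at_top"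
    using eventually_gt_at_top[of "1::real"]
    by eventually_elim (simp add: powr_def exp_diff)
  show ?thesis by (rule tendsto_cong[THEN iffD1, OF ev lim])
qed

theorem mainTheorem4:
  fixes a :: "nat \<Rightarrow> real" and \<rho> :: real
  assumes rho_pos: "\<rho> > 0"
    and conv: "\<And>x. \<bar>x\<bar> < \<rho> \<Longrightarrow> summable (\<lambda>k. a k * x ^ k)"
  shows "(\<forall>y::real. y > 1 + max 1 (1 / \<rho>) \<longrightarrow>
            summable (\<lambda>m. coefc a (m + 2) / y ^ (m + 2)) \<and>
            (y + 1) * Gfun a y - y * Gfun a (y - 1) =
              a 0 - (\<Sum>m. coefc a (m + 2) / y ^ (m + 2)))
       \<and> ((\<lambda>y. (y + 1) * Gfun a y - y * Gfun a (y - 1)) \<longlongrightarrow> a 0) at_top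
       \<and> ((\<lambda>y::real. (y + 1) powr (y + 1) / y powr y - y powr y / (y - 1) powr (y - 1))
            \<longlongrightarrow> exp 1) at_top"
proof (intro conjI allI impI)
  fix y :: real
  assume hy: "y > 1 + max 1 (1 / \<rho>)"
  have y2: "y > 2" using hy by simp
  have "y - 1 > 1 / \<rho>" using hy by simp
  hence ty: "1 / (y - 1) < \<rho>" using rho_pos y2
    by (simp add: field_simps)
  define x where "x = 1 / y"
  have x0: "0 < x" "x < 1" using y2 by (auto simp: x_def)
  have xt: "x / (1 - x) = 1 / (y - 1)" using y2 by (simp add: x_def field_simps)
  have t0: "0 < 1 / (y - 1)" using y2 by simp
  define r where "r = (1 / (y - 1) + \<rho>) / 2"
  have r: "1 / (y - 1) < r" "r < \<rho>" using ty by (auto simp: r_def)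
  have r0: "0 < r" using r t0 by linarith
  have "summable (\<lambda>k. a k * r ^ k)" by (rule conv) (use r r0 in auto)
  hence "summable (\<lambda>k. norm (a k * (1 / (y - 1)) ^ k))"
    by (rule powser_insidea) (use r r0 t0 in auto)
  hence sa: "summable (\<lambda>k. \<bar>a k\<bar> * (x / (1 - x)) ^ k)"
    using t0 by (simp add: xt abs_mult)
  have key: "(\<lambda>n. cc a n * x ^ n) sums (Gfun a (y - 1) - a 0)"
    using key_series[OF x0 sa] by (simp add: xt Gfun_def pser_def)
  have "x < 1 / (y - 1)" using y2 by (simp add: x_def field_simps)
  hence sA: "summable (\<lambda>k. a k * x ^ k)" by (intro conv) (use x0 ty in auto)
  hence A: "(\<lambda>k. a k * x ^ k) sums Gfun a y"
    by (simp add: Gfun_def pser_def x_def summable_sums)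
  have s1: "(\<lambda>m. cc a (m + 3) * x ^ (m + 3)) sums (Gfun a (y - 1) - a 0 - (\<Sum>i<3. cc a i * x ^ i))"
    by (rule sums_split_initial_segment[OF key])
  have s2: "(\<lambda>m. a (m + 3) * x ^ (m + 3)) sums (Gfun a y - (\<Sum>i<3. a i * x ^ i))"
    by (rule sums_split_initial_segment[OF A])
  have s3: "(\<lambda>m. a (m + 2) * x ^ (m + 2)) sums (Gfun a y - (\<Sum>i<2. a i * x ^ i))"
    by (rule sums_split_initial_segment[OF A])
  define T where "T = y * (Gfun a (y - 1) - a 0 - (\<Sum>i<3. cc a i * x ^ i))
      - y * (Gfun a y - (\<Sum>i<3. a i * x ^ i)) - (Gfun a y - (\<Sum>i<2. a i * x ^ i))"
  have sT: "(\<lambda>m. y * (cc a (m + 3) * x ^ (m + 3)) - y * (a (m + 3) * x ^ (m + 3))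
      - a (m + 2) * x ^ (m + 2)) sums T"
    unfolding T_def by (intro sums_diff sums_mult s1 s2 s3)
  have feq: "(\<lambda>m. coefc a (m + 2) / y ^ (m + 2)) = (\<lambda>m. y * (cc a (m + 3) * x ^ (m + 3)) - y * (a (m + 3) * x ^ (m + 3))
      - a (m + 2) * x ^ (m + 2))"
  proof
    fix m :: nat
    have c: "coefc a (m + 2) = cc a (m + 3) - a (m + 3) - a (m + 2)"
      using coefc_cc[of "m + 2" a] by (simp add: numeral_3_eq_3)
    have yx: "y * x ^ (m + 3) = x ^ (m + 2)"
      using y2 by (simp add: x_def numeral_3_eq_3 field_simps)
    have "coefc a (m + 2) / y ^ (m + 2) = coefc a (m + 2) * x ^ (m + 2)"
      by (simp add: x_def power_one_over)
    also have "\<dots> = cc a (m + 3) * (y * x ^ (m + 3)) - a (m + 3) * (y * x ^ (m + 3)) - a (m + 2) * x ^ (m + 2)"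
      unfolding yx c by (simp add: algebra_simps)
    finally show "coefc a (m + 2) / y ^ (m + 2) = y * (cc a (m + 3) * x ^ (m + 3)) - y * (a (m + 3) * x ^ (m + 3))
      - a (m + 2) * x ^ (m + 2)" by (simp add: algebra_simps)
  qed
  have sT': "(\<lambda>m. coefc a (m + 2) / y ^ (m + 2)) sums T" using sT feq by simp
  have S3c: "(\<Sum>i<3. cc a i * x ^ i) = a 1 * x + (a 1 + a 2) * x ^ 2"
    by (simp add: cc_def eval_nat_numeral)
  have S3a: "(\<Sum>i<3. a i * x ^ i) = a 0 + a 1 * x + a 2 * x ^ 2"
    by (simp add: eval_nat_numeral)
  have S2a: "(\<Sum>i<2. a i * x ^ i) = a 0 + a 1 * x"
    by (simp add: eval_nat_numeral)
  have nz: "y \<noteq> 0" using y2 by auto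
  have Tval: "a 0 - T = (y + 1) * Gfun a y - y * Gfun a (y - 1)"
    using nz unfolding T_def S3c S3a S2a by (simp add: x_def field_simps power2_eq_square)
  show "summable (\<lambda>m. coefc a (m + 2) / y ^ (m + 2))" using sT' by (rule sums_summable)
  show "(y + 1) * Gfun a y - y * Gfun a (y - 1) = a 0 - (\<Sum>m. coefc a (m + 2) / y ^ (m + 2))"
    using sT' Tval by (simp add: sums_iff)
next
  show "((\<lambda>y::real. (y + 1) powr (y + 1) / y powr y - y powr y / (y - 1) powr (y - 1))
            \<longlongrightarrow> exp 1) at_top" by (rule e_limit)
next
  define r where "r = \<rho> / 2"
  have r: "0 < r" "r < \<rho>" using rho_pos by (auto simp: r_def)
  have "summable (\<lambda>k. a k * (3 * \<rho> / 4) ^ k)" by (rule conv) (use rho_pos in auto)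
  hence "summable (\<lambda>k. norm (a k * r ^ k))"
    by (rule powser_insidea) (use rho_pos in \<open>auto simp: r_def\<close>)
  hence "summable (\<lambda>k. \<bar>a k\<bar> * r ^ k)" using r by (simp add: abs_mult)
  hence "summable (\<lambda>k. \<bar>a (k + 2)\<bar> * r ^ (k + 2))" by (subst summable_iff_shift)
  hence sd: "summable (\<lambda>k. \<bar>a (k + 2)\<bar> * r ^ (k + 2) / r ^ 2)" by (rule summable_divide)
  have eqr: "\<bar>a (k + 2)\<bar> * r ^ (k + 2) / r ^ 2 = \<bar>a (k + 2)\<bar> * r ^ k" for k
    using r by (simp add: power_add power2_eq_square)
  from sd have sr: "summable (\<lambda>k. \<bar>a (k + 2)\<bar> * r ^ k)" by (simp only: eqr)
  define M where "M = (\<Sum>k. \<bar>a (k + 2)\<bar> * r ^ k)"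
  have Eb: "\<bar>pser a z - a 0 - a 1 * z\<bar> \<le> M * z ^ 2" if "\<bar>z\<bar> \<le> r" for z
    unfolding M_def by (rule E_bound[OF r(1) sr conv that]) (use that r in auto)
  define b where "b = (\<lambda>y::real. \<bar>a 1\<bar> * \<bar>(y + 1) / y - y / (y - 1)\<bar> + M * ((y + 1) / y ^ 2 + y / (y - 1) ^ 2))"
  have u: "((\<lambda>y::real. (y + 1) / y - y / (y - 1)) \<longlongrightarrow> 0) at_top" by real_asymp
  have v: "((\<lambda>y::real. (y + 1) / y ^ 2 + y / (y - 1) ^ 2) \<longlongrightarrow> 0) at_top" by real_asymp
  have b0: "(b \<longlongrightarrow> 0) at_top"
    unfolding b_def
    by (intro tendsto_add_zero tendsto_mult_right_zero tendsto_rabs_zero u v)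
  have ev: "eventually (\<lambda>y. norm ((y + 1) * Gfun a y - y * Gfun a (y - 1) - a 0) \<le> b y) at_top"
    using eventually_ge_at_top[of "2 + 1 / r"]
  proof eventually_elim
    case (elim y)
    have y2: "y > 1" using elim r by (smt (verit) divide_pos_pos)
    have "1 / (y - 1) \<le> r"
    proof -
      have "y - 1 \<ge> 1 / r" using elim by simp
      hence "1 \<le> r * (y - 1)" using r by (simp add: field_simps)
      thus ?thesis using y2 by (simp add: field_simps)
    qed
    hence z2: "\<bar>1 / (y - 1)\<bar> \<le> r" using y2 by simp
    have z1: "\<bar>1 / y\<bar> \<le> r"
    proof -
      have "1 / y \<le> 1 / (y - 1)" using y2 by (simp add: frac_le)
      thus ?thesis using z2 y2 by simp
    qed
    define E1 where "E1 = pser a (1 / y) - a 0 - a 1 * (1 / y)"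
    define E2 where "E2 = pser a (1 / (y - 1)) - a 0 - a 1 * (1 / (y - 1))"
    have e1: "\<bar>E1\<bar> \<le> M * (1 / y) ^ 2" unfolding E1_def by (rule Eb[OF z1])
    have e2: "\<bar>E2\<bar> \<le> M * (1 / (y - 1)) ^ 2" unfolding E2_def by (rule Eb[OF z2])
    have D: "(y + 1) * Gfun a y - y * Gfun a (y - 1) - a 0
        = a 1 * ((y + 1) / y - y / (y - 1)) + (y + 1) * E1 - y * E2"
    proof -
      have "(y + 1) * Gfun a y - y * Gfun a (y - 1) - a 0
        = a 1 * ((y + 1) * (1 / y) - y * (1 / (y - 1))) + (y + 1) * E1 - y * E2"
        unfolding E1_def E2_def Gfun_def by (simp add: algebra_simps)
      thus ?thesis by simp
    qed
    have f1: "\<bar>(y + 1) * E1\<bar> \<le> (y + 1) * (M * (1 / y) ^ 2)"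
      using e1 y2 by (simp add: abs_mult)
    have f2: "\<bar>y * E2\<bar> \<le> y * (M * (1 / (y - 1)) ^ 2)"
      using e2 y2 by (simp add: abs_mult)
    have nz: "y \<noteq> 0" "y - 1 \<noteq> 0" using y2 by auto
    have f3: "(y + 1) * (M * (1 / y) ^ 2) + y * (M * (1 / (y - 1)) ^ 2) = M * ((y + 1) / y ^ 2 + y / (y - 1) ^ 2)"
      using nz by (simp add: power_one_over algebra_simps)
    let ?w = "(y + 1) / y - y / (y - 1)"
    have f4: "\<bar>a 1 * ?w\<bar> = \<bar>a 1\<bar> * \<bar>?w\<bar>" by (rule abs_mult)
    have f5: "\<bar>a 1 * ?w + (y + 1) * E1 - y * E2\<bar> \<le> \<bar>a 1 * ?w\<bar> + \<bar>(y + 1) * E1\<bar> + \<bar>y * E2\<bar>"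
      by (rule tri3)
    show ?case
      unfolding D b_def real_norm_def using f1 f2 f3 f4 f5 by linarith
  qed
  have "((\<lambda>y. (y + 1) * Gfun a y - y * Gfun a (y - 1) - a 0) \<longlongrightarrow> 0) at_top"
    by (rule Lim_null_comparison[OF ev b0])
  thus "((\<lambda>y. (y + 1) * Gfun a y - y * Gfun a (y - 1)) \<longlongrightarrow> a 0) at_top"
    by (simp add: LIM_zero_iff)
qed

end
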